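(* Let $W$ be an outcome satisfying rank-JR. Then $W$ satisfies $(1+\sqrt2)$-proportional fairness, satisfies $2$-individual fairness (when $N\subseteq C$), and is in the $\left(\gamma,\frac{2\gamma}{\gamma-1}\right)$-transferable core for every $\gamma>1$.
   Context: Let $(\mathcal X,d)$ be a metric space, $N=[n]$ a set of agents and $C$ a set of candidates located in $\mathcal X$, $k\in\mathbb N^+$; an outcome is $W\subseteq C$ with $|W|\le k$; $B(i,r)=\{x\in\mathcal X:d(i,x)\le r\}$; $d(i,W)=\min_{c\in W}d(i,c)$. Rank-JR: for every $y\in\mathbb R$ and every $N'\subseteq N$ with $|N'|\ge n/k$ and $|\bigcap_{i\in N'}B(i,y)\cap C|\ge1$ there is $i\in N'$ with $|B(i,y)\cap W|\ge1$. $\alpha$-proportional fairness: there is no $N'\subseteq N$ with $|N'|\ge n/k$ and $c\in C\setminus W$ with $\alpha\,d(i,c)<d(i,W)$ for all $i\in N'$. $\beta$-individual fairness (defined only for instances with $N\subseteq C$): $d(i,W)\le\beta\,r(i)$ for all $i\in N$, where $r(i)=\min\{r: |B(i,r)\cap N|\ge n/k\}$. $(\gamma,\alpha)$-transferable core: there is no $N'\subseteq N$ and $c\in C\setminus W$ with $|N'|\ge\gamma n/k$ and $\alpha\sum_{i\in N'}d(i,c)<\sum_{i\in N'}d(i,W)$. *)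

theory Defs
  imports "HOL-Analysis.Analysis"
begin

(* Agents: a finite set N of indices, agent i located at loc i in the metric space 'a.
   n = card N. Candidates: a finite set C of points. Ball B(i,r) = cball (loc i) r.
   d(i,W) = infdist (loc i) W. *)

definition outcome :: "'a set \<Rightarrow> nat \<Rightarrow> 'a set \<Rightarrow> bool" where
  "outcome C k W \<longleftrightarrow> W \<subseteq> C \<and> card W \<le> k"

definition rank_JR :: "'b set \<Rightarrow> ('b \<Rightarrow> 'a::metric_space) \<Rightarrow> 'a set \<Rightarrow> nat \<Rightarrow> 'a set \<Rightarrow> bool" where
  "rank_JR N loc C k W \<longleftrightarrow>
     (\<forall>y::real. \<forall>N'. N' \<subseteq> N \<and> real (card N') \<ge> real (card N) / real k
        \<and> card ((\<Inter>i\<in>N'. cball (loc i) y) \<inter> C) \<ge> 1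
        \<longrightarrow> (\<exists>i\<in>N'. card (cball (loc i) y \<inter> W) \<ge> 1))"

definition prop_fair :: "real \<Rightarrow> 'b set \<Rightarrow> ('b \<Rightarrow> 'a::metric_space) \<Rightarrow> 'a set \<Rightarrow> nat \<Rightarrow> 'a set \<Rightarrow> bool" where
  "prop_fair \<alpha> N loc C k W \<longleftrightarrow>
     \<not> (\<exists>N' c. N' \<subseteq> N \<and> real (card N') \<ge> real (card N) / real k \<and> c \<in> C - W \<and>
              (\<forall>i\<in>N'. \<alpha> * dist (loc i) c < infdist (loc i) W))"

definition ind_radius :: "'b set \<Rightarrow> ('b \<Rightarrow> 'a::metric_space) \<Rightarrow> nat \<Rightarrow> 'b \<Rightarrow> real" where
  "ind_radius N loc k i =
     (LEAST r::real. real (card {j\<in>N. loc j \<in> cball (loc i) r}) \<ge> real (card N) / real k)"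

definition ind_fair :: "real \<Rightarrow> 'b set \<Rightarrow> ('b \<Rightarrow> 'a::metric_space) \<Rightarrow> nat \<Rightarrow> 'a set \<Rightarrow> bool" where
  "ind_fair \<beta> N loc k W \<longleftrightarrow> (\<forall>i\<in>N. infdist (loc i) W \<le> \<beta> * ind_radius N loc k i)"

definition transferable_core :: "real \<Rightarrow> real \<Rightarrow> 'b set \<Rightarrow> ('b \<Rightarrow> 'a::metric_space) \<Rightarrow> 'a set \<Rightarrow> nat \<Rightarrow> 'a set \<Rightarrow> bool" where
  "transferable_core \<gamma> \<alpha> N loc C k W \<longleftrightarrow>
     \<not> (\<exists>N' c. N' \<subseteq> N \<and> real (card N') \<ge> \<gamma> * real (card N) / real k \<and> c \<in> C - W \<and>
              \<alpha> * (\<Sum>i\<in>N'. dist (loc i) c) < (\<Sum>i\<in>N'. infdist (loc i) W))"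

end

theory Submission
  imports Defs
begin

lemma interval_sum_bound:
  fixes I :: "'i set" and s e :: "'i \<Rightarrow> real" and D T :: real
  assumes fin: "finite I" and iv: "\<forall>i\<in>I. 0 \<le> s i \<and> s i \<le> e i \<and> e i \<le> D"
   and cnt: "\<forall>y. real (card {i\<in>I. s i \<le> y \<and> y < e i}) \<le> T" and T0: "T \<ge> 0" and D0: "D \<ge> 0"
  shows "(\<Sum>i\<in>I. e i - s i) \<le> T * D"
proof -
  have pw: "(\<Sum>i\<in>I. indicator {s i..<e i} y :: ennreal) \<le> ennreal T * indicator {0..<D} y" for y
  proof -
    have "(\<Sum>i\<in>I. indicator {s i..<e i} y :: ennreal) = (\<Sum>i\<in>{i\<in>I. s i \<le> y \<and> y < e i}. 1)"
      using fin by (intro sum.mono_neutral_cong_right) (auto simp: indicator_def)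
    also have "\<dots> = of_nat (card {i\<in>I. s i \<le> y \<and> y < e i})" by simp
    finally have eq: "(\<Sum>i\<in>I. indicator {s i..<e i} y :: ennreal) = of_nat (card {i\<in>I. s i \<le> y \<and> y < e i})" .
    show ?thesis
    proof (cases "0 \<le> y \<and> y < D")
      case True
      have "of_nat (card {i\<in>I. s i \<le> y \<and> y < e i}) \<le> ennreal T"
        unfolding ennreal_of_nat_eq_real_of_nat using cnt T0 by (simp add: ennreal_leI)
      then show ?thesis using True eq by (simp add: indicator_def)
    next
      case False
      have "{i\<in>I. s i \<le> y \<and> y < e i} = {}" using False iv by force
      then show ?thesis using eq by simp
    qed
  qed
  have "ennreal (\<Sum>i\<in>I. e i - s i) = (\<Sum>i\<in>I. ennreal (e i - s i))"
    using iv by (subst sum_ennreal) auto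
  also have "\<dots> = (\<Sum>i\<in>I. emeasure lborel {s i..<e i})"
    using iv by (intro sum.cong) auto
  also have "\<dots> = (\<Sum>i\<in>I. \<integral>\<^sup>+ y. indicator {s i..<e i} y \<partial>lborel)"
    by (intro sum.cong) auto
  also have "\<dots> = (\<integral>\<^sup>+ y. (\<Sum>i\<in>I. indicator {s i..<e i} y) \<partial>lborel)"
    by (rule nn_integral_sum[symmetric]) auto
  also have "\<dots> \<le> (\<integral>\<^sup>+ y. ennreal T * indicator {0..<D} y \<partial>lborel)"
    by (intro nn_integral_mono pw)
  also have "\<dots> = ennreal T * emeasure lborel {0..<D}"
    by (rule nn_integral_cmult_indicator) auto
  also have "\<dots> = ennreal (T * D)" using D0 T0 by (simp add: ennreal_mult)
  finally show ?thesis using T0 D0 by simp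
qed

lemma infdist_two_step:
  fixes x z u :: "'a::metric_space"
  assumes "u \<in> W"
  shows "infdist x W \<le> dist x z + dist z u"
  using infdist_le[OF assms, of x] dist_triangle[of x u z] by linarith

lemma cball_W_nonempty:
  assumes "card (cball p y \<inter> W) \<ge> 1"
  obtains u where "u \<in> W" "dist p u \<le> y"
proof -
  have "cball p y \<inter> W \<noteq> {}" using assms by (metis card.empty not_one_le_zero)
  then show ?thesis using that by (auto simp: mem_cball)
qed

lemma card_inter_C:
  assumes "finite C" "c \<in> C" "\<forall>i\<in>G. dist (loc i) c \<le> y"
  shows "card ((\<Inter>i\<in>G. cball (loc i) y) \<inter> C) \<ge> 1"
proof -
  have "c \<in> (\<Inter>i\<in>G. cball (loc i) y) \<inter> C" using assms by (auto simp: mem_cball)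
  moreover have "finite ((\<Inter>i\<in>G. cball (loc i) y) \<inter> C)" using assms(1) by auto
  ultimately show ?thesis by (metis One_nat_def Suc_leI card_gt_0_iff empty_iff)
qed

theorem theorem5:
  fixes N :: "'b set" and loc :: "'b \<Rightarrow> 'a::metric_space" and C W :: "'a set" and k :: nat
  assumes "finite N" and "N \<noteq> {}" and "finite C" and "k > 0"
    and "outcome C k W"
    and "rank_JR N loc C k W"
  shows "prop_fair (1 + sqrt 2) N loc C k W
         \<and> (loc ` N \<subseteq> C \<longrightarrow> ind_fair 2 N loc k W)
         \<and> (\<forall>\<gamma>::real. \<gamma> > 1 \<longrightarrow> transferable_core \<gamma> (2 * \<gamma> / (\<gamma> - 1)) N loc C k W)"
proof -
  note finN = assms(1) and finC = assms(3)
  define T where "T = real (card N) / real k"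
  have T0: "T > 0" using assms(1,2,4) unfolding T_def by (simp add: card_gt_0_iff)
  have RJ: "\<And>y G. G \<subseteq> N \<Longrightarrow> real (card G) \<ge> T \<Longrightarrow> card ((\<Inter>i\<in>G. cball (loc i) y) \<inter> C) \<ge> 1
        \<Longrightarrow> \<exists>i\<in>G. \<exists>u\<in>W. dist (loc i) u \<le> y"
  proof -
    fix y G assume "G \<subseteq> N" "real (card G) \<ge> T" "card ((\<Inter>i\<in>G. cball (loc i) y) \<inter> C) \<ge> 1"
    then obtain i where "i \<in> G" "card (cball (loc i) y \<inter> W) \<ge> 1"
      using assms(6) unfolding rank_JR_def T_def by blast
    then show "\<exists>i\<in>G. \<exists>u\<in>W. dist (loc i) u \<le> y" by (metis cball_W_nonempty)
  qed
  have P1: "prop_fair (1 + sqrt 2) N loc C k W"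
    unfolding prop_fair_def
  proof
    assume "\<exists>N' c. N' \<subseteq> N \<and> real (card N') \<ge> real (card N) / real k \<and> c \<in> C - W \<and>
              (\<forall>i\<in>N'. (1 + sqrt 2) * dist (loc i) c < infdist (loc i) W)"
    then obtain N' c where N': "N' \<subseteq> N" "real (card N') \<ge> T" "c \<in> C - W"
      and lt: "\<forall>i\<in>N'. (1 + sqrt 2) * dist (loc i) c < infdist (loc i) W"
      unfolding T_def by blast
    have finN': "finite N'" using N'(1) finN finite_subset by blast
    have "N' \<noteq> {}" using N'(2) T0 by auto
    have "\<exists>m\<in>N'. \<forall>i\<in>N'. dist (loc i) c \<le> dist (loc m) c"
    proof -
      let ?M = "Max ((\<lambda>i. dist (loc i) c) ` N')"
      have "?M \<in> (\<lambda>i. dist (loc i) c) ` N'" using finN' \<open>N' \<noteq> {}\<close> by (intro Max_in) auto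
      then obtain m where "m \<in> N'" "?M = dist (loc m) c" by auto
      moreover have "\<forall>i\<in>N'. dist (loc i) c \<le> ?M" using finN' by auto
      ultimately show ?thesis by auto
    qed
    then obtain m where m: "m \<in> N'" "\<forall>i\<in>N'. dist (loc i) c \<le> dist (loc m) c" by blast
    define Dm where "Dm = dist (loc m) c"
    have "card ((\<Inter>i\<in>N'. cball (loc i) Dm) \<inter> C) \<ge> 1"
      using card_inter_C[OF finC, of c N' loc Dm] N'(3) m(2) unfolding Dm_def by auto
    then obtain j u where j: "j \<in> N'" "u \<in> W" "dist (loc j) u \<le> Dm"
      using RJ[OF N'(1,2)] by blast
    have bj: "infdist (loc j) W \<le> Dm" using infdist_le[OF j(2), of "loc j"] j(3) by linarith
    have aj: "(1 + sqrt 2) * dist (loc j) c < Dm" using lt j(1) bj by fastforce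
    have bm: "infdist (loc m) W \<le> Dm + dist (loc j) c + Dm"
      using infdist_le[OF j(2), of "loc m"] dist_triangle[of "loc m" u c] dist_triangle[of c u "loc j"]
        j(3) unfolding Dm_def by (simp add: dist_commute)
    have am: "(1 + sqrt 2) * Dm < infdist (loc m) W" using lt m(1) unfolding Dm_def by auto
    define s where "s = sqrt 2"
    have ss: "s * s = 2" unfolding s_def by simp
    have s0: "s > 0" unfolding s_def by simp
    have a0: "dist (loc j) c \<ge> 0" by simp
    have e1: "(1 + s) * Dm < 2 * Dm + dist (loc j) c" using am bm unfolding s_def by linarith
    have e2: "(1 + s) * dist (loc j) c < Dm" using aj unfolding s_def by simp
    have "(1 + s) * ((1 + s) * Dm) < (1 + s) * (2 * Dm + dist (loc j) c)"
      using e1 s0 by (intro mult_strict_left_mono) auto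
    also have "\<dots> = 2 * (1 + s) * Dm + (1 + s) * dist (loc j) c" by (simp add: algebra_simps)
    finally have "(1 + s) * ((1 + s) * Dm) < 2 * (1 + s) * Dm + Dm" using e2 by linarith
    moreover have "(1 + s) * ((1 + s) * Dm) = 2 * (1 + s) * Dm + Dm"
      using ss by (simp add: algebra_simps)
    ultimately show False by linarith
  qed
  have P2: "loc ` N \<subseteq> C \<longrightarrow> ind_fair 2 N loc k W"
  proof
    assume LC: "loc ` N \<subseteq> C"
    show "ind_fair 2 N loc k W" unfolding ind_fair_def
    proof
      fix i assume i: "i \<in> N"
      define P where "P r \<longleftrightarrow> real (card {j\<in>N. loc j \<in> cball (loc i) r}) \<ge> T" for r
      define S where "S r = {j\<in>N. loc j \<in> cball (loc i) r}" for r
      define R where "R = {r \<in> (\<lambda>j. dist (loc i) (loc j)) ` N. P r}"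
      have finR: "finite R" unfolding R_def using finN by auto
      define dmax where "dmax = Max ((\<lambda>j. dist (loc i) (loc j)) ` N)"
      have "dmax \<in> (\<lambda>j. dist (loc i) (loc j)) ` N" unfolding dmax_def using finN assms(2) by (intro Max_in) auto
      moreover have "S dmax = N" unfolding S_def dmax_def using finN by (auto simp: mem_cball)
      moreover have "real (card N) \<ge> T" unfolding T_def using assms(4)
        by (simp add: divide_le_eq mult_le_cancel_left1)
      ultimately have "dmax \<in> R" unfolding R_def P_def S_def by auto
      then have Rne: "R \<noteq> {}" by auto
      define r0 where "r0 = Min R"
      have "r0 \<in> R" unfolding r0_def using finR Rne by (rule Min_in)
      then have Pr0: "P r0" unfolding R_def by auto
      have least: "r0 \<le> r" if Pr: "P r" for r
      proof -
        have "S r \<noteq> {}" using Pr T0 unfolding P_def S_def by (metis card.empty of_nat_0 not_le)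
        have finS: "finite (S r)" unfolding S_def using finN by auto
        define r' where "r' = Max ((\<lambda>j. dist (loc i) (loc j)) ` S r)"
        have "r' \<in> (\<lambda>j. dist (loc i) (loc j)) ` S r" unfolding r'_def using finS \<open>S r \<noteq> {}\<close> by (intro Max_in) auto
        then have r'r: "r' \<le> r" and r'N: "r' \<in> (\<lambda>j. dist (loc i) (loc j)) ` N"
          unfolding S_def by (auto simp: mem_cball)
        have "S r' = S r"
        proof
          show "S r' \<subseteq> S r" using r'r unfolding S_def by (auto simp: mem_cball)
          show "S r \<subseteq> S r'" unfolding r'_def using finS by (auto simp: S_def mem_cball)
        qed
        then have "P r'" using Pr unfolding P_def S_def by simp
        then have "r' \<in> R" using r'N unfolding R_def by auto
        then have "r0 \<le> r'" unfolding r0_def using finR by simp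
        then show ?thesis using r'r by simp
      qed
      have rad: "ind_radius N loc k i = r0"
        unfolding ind_radius_def
        by (rule Least_equality) (use Pr0 least in \<open>auto simp: P_def T_def\<close>)
      have "card ((\<Inter>j\<in>S r0. cball (loc j) r0) \<inter> C) \<ge> 1"
        using card_inter_C[OF finC, of "loc i" "S r0" loc r0] LC i
        unfolding S_def by (auto simp: mem_cball dist_commute)
      moreover have "S r0 \<subseteq> N" "real (card (S r0)) \<ge> T" using Pr0 unfolding S_def P_def by auto
      ultimately obtain j u where j: "j \<in> S r0" "u \<in> W" "dist (loc j) u \<le> r0"
        using RJ by blast
      have "dist (loc i) (loc j) \<le> r0" using j(1) unfolding S_def by (auto simp: mem_cball)
      then have "infdist (loc i) W \<le> 2 * r0" using infdist_two_step[OF j(2), of "loc i" "loc j"] j(3) by linarith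
      then show "infdist (loc i) W \<le> 2 * ind_radius N loc k i" using rad by simp
    qed
  qed
  have P3: "\<forall>\<gamma>::real. \<gamma> > 1 \<longrightarrow> transferable_core \<gamma> (2 * \<gamma> / (\<gamma> - 1)) N loc C k W"
  proof (intro allI impI)
    fix \<gamma> :: real assume g1: "\<gamma> > 1"
    define \<alpha> where "\<alpha> = 2 * \<gamma> / (\<gamma> - 1)"
    show "transferable_core \<gamma> (2 * \<gamma> / (\<gamma> - 1)) N loc C k W"
      unfolding transferable_core_def \<alpha>_def[symmetric]
    proof
      assume "\<exists>N' c. N' \<subseteq> N \<and> real (card N') \<ge> \<gamma> * real (card N) / real k \<and> c \<in> C - W \<and>
              \<alpha> * (\<Sum>i\<in>N'. dist (loc i) c) < (\<Sum>i\<in>N'. infdist (loc i) W)"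
      then obtain N' c where N': "N' \<subseteq> N" "real (card N') \<ge> \<gamma> * T" "c \<in> C - W"
        and lt: "\<alpha> * (\<Sum>i\<in>N'. dist (loc i) c) < (\<Sum>i\<in>N'. infdist (loc i) W)"
        unfolding T_def by auto
      have finN': "finite N'" using N'(1) finN finite_subset by blast
      define a where "a i = dist (loc i) c" for i
      define b where "b i = infdist (loc i) W" for i
      define D where "D = infdist c W"
      define Sa where "Sa = (\<Sum>i\<in>N'. a i)"
      define Sb where "Sb = (\<Sum>i\<in>N'. b i)"
      have a0: "a i \<ge> 0" for i unfolding a_def by simp
      have D0: "D \<ge> 0" unfolding D_def by (simp add: infdist_nonneg)
      have Sa0: "Sa \<ge> 0" unfolding Sa_def using a0 by (simp add: sum_nonneg)
      have alpha0: "\<alpha> > 0" unfolding \<alpha>_def using g1 by simp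
      have ltS: "\<alpha> * Sa < Sb" using lt unfolding Sa_def Sb_def a_def b_def by simp
      show False
      proof (cases "W = {}")
        case True
        then have "Sb = 0" unfolding Sb_def b_def by (simp add: infdist_def)
        then show False using ltS alpha0 Sa0 by (metis less_eq_real_def mult_nonneg_nonneg not_le)
      next
        case Wne: False
        have tri1: "b i \<le> a i + D" for i
          unfolding a_def b_def D_def using infdist_triangle[of "loc i" W c] by simp
        have tri2: "D \<le> b i + a i" for i
          unfolding a_def b_def D_def using infdist_triangle[of c W "loc i"] by (simp add: dist_commute)
        have cnt: "real (card {i\<in>N'. a i \<le> y \<and> y < b i}) < T" for y
        proof (rule ccontr)
          let ?G = "{i\<in>N'. a i \<le> y \<and> y < b i}"
          assume "\<not> real (card ?G) < T"
          then have GT: "real (card ?G) \<ge> T" by simp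
          have "card ((\<Inter>i\<in>?G. cball (loc i) y) \<inter> C) \<ge> 1"
            using card_inter_C[OF finC, of c ?G loc y] N'(3) unfolding a_def by auto
          moreover have "?G \<subseteq> N" using N'(1) by auto
          ultimately obtain i u where "i \<in> ?G" "u \<in> W" "dist (loc i) u \<le> y"
            using RJ GT by blast
          moreover have "b i \<le> dist (loc i) u" unfolding b_def using infdist_le[OF \<open>u \<in> W\<close>] by simp
          ultimately show False by auto
        qed
        define L where "L = {i\<in>N'. a i < D / 2}"
        have LN': "L \<subseteq> N'" unfolding L_def by auto
        have finL: "finite L" using finN' LN' finite_subset by blast
        have cardL: "real (card L) < T"
        proof (cases "L = {}")
          case True then show ?thesis using T0 by simp
        next
          case False
          define y where "y = Max (a ` L)"
          have "y \<in> a ` L" unfolding y_def using finL False by (intro Max_in) auto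
          then have yD: "y < D / 2" unfolding L_def by auto
          have "L \<subseteq> {i\<in>N'. a i \<le> y \<and> y < b i}"
          proof
            fix i assume iL: "i \<in> L"
            have "a i \<le> y" unfolding y_def using finL iL by simp
            moreover have "y < b i" using tri2[of i] iL yD unfolding L_def by auto
            ultimately show "i \<in> {i\<in>N'. a i \<le> y \<and> y < b i}" using iL LN' by auto
          qed
          then have "card L \<le> card {i\<in>N'. a i \<le> y \<and> y < b i}"
            using finN' by (intro card_mono) auto
          then show ?thesis using cnt[of y] by linarith
        qed
        have step1: "(\<gamma> - 1) * T * D \<le> 2 * Sa"
        proof -
          have "real (card (N' - L)) = real (card N') - real (card L)"
            using LN' finL by (simp add: card_Diff_subset of_nat_diff card_mono finN')
          then have cNL: "real (card (N' - L)) \<ge> (\<gamma> - 1) * T" using N'(2) cardL by (simp add: algebra_simps)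
          have "(\<Sum>i\<in>N' - L. D / 2) \<le> (\<Sum>i\<in>N' - L. a i)"
            by (intro sum_mono) (auto simp: L_def)
          also have "\<dots> \<le> Sa" unfolding Sa_def using finN' a0 by (intro sum_mono2) auto
          finally have "real (card (N' - L)) * (D / 2) \<le> Sa" by simp
          moreover have "(\<gamma> - 1) * T * (D / 2) \<le> real (card (N' - L)) * (D / 2)"
            using cNL D0 by (intro mult_right_mono) auto
          ultimately show ?thesis by simp
        qed
        define Bd where "Bd = {i\<in>N'. b i > 2 * a i}"
        have BdN': "Bd \<subseteq> N'" unfolding Bd_def by auto
        have finBd: "finite Bd" using finN' BdN' finite_subset by blast
        have step2a: "(\<Sum>i\<in>Bd. (b i - a i) - a i) \<le> T * D"
        proof (rule interval_sum_bound[OF finBd])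
          show "\<forall>i\<in>Bd. 0 \<le> a i \<and> a i \<le> b i - a i \<and> b i - a i \<le> D"
            using a0 tri1 unfolding Bd_def by (auto simp: algebra_simps)
          show "\<forall>y. real (card {i\<in>Bd. a i \<le> y \<and> y < b i - a i}) \<le> T"
          proof
            fix y
            have "card {i\<in>Bd. a i \<le> y \<and> y < b i - a i} \<le> card {i\<in>N'. a i \<le> y \<and> y < b i}"
              using finN' BdN' a0 by (intro card_mono) (auto, smt (verit))
            then show "real (card {i\<in>Bd. a i \<le> y \<and> y < b i - a i}) \<le> T" using cnt[of y] by linarith
          qed
          show "T \<ge> 0" using T0 by simp
          show "D \<ge> 0" by (rule D0)
        qed
        have "(\<Sum>i\<in>N'. b i - 2 * a i) = (\<Sum>i\<in>Bd. b i - 2 * a i) + (\<Sum>i\<in>N' - Bd. b i - 2 * a i)"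
          using finN' BdN' by (metis add.commute sum.subset_diff)
        also have "(\<Sum>i\<in>N' - Bd. b i - 2 * a i) \<le> 0"
          by (intro sum_nonpos) (auto simp: Bd_def)
        finally have "(\<Sum>i\<in>N'. b i - 2 * a i) \<le> T * D" using step2a by (simp add: algebra_simps)
        then have step2: "Sb \<le> 2 * Sa + T * D"
          unfolding Sa_def Sb_def by (simp add: sum_subtractf sum_distrib_left)
        have ga: "(\<gamma> - 1) * \<alpha> = 2 * \<gamma>" unfolding \<alpha>_def using g1 by simp
        have "(\<gamma> - 1) * (\<alpha> * Sa) < (\<gamma> - 1) * Sb"
          using ltS g1 by (intro mult_strict_left_mono) auto
        also have "\<dots> \<le> (\<gamma> - 1) * (2 * Sa + T * D)"
          using step2 g1 by (intro mult_left_mono) auto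
        finally have "2 * \<gamma> * Sa < (\<gamma> - 1) * (2 * Sa) + (\<gamma> - 1) * T * D"
          using ga by (simp add: algebra_simps)
        then show False using step1 by (simp add: algebra_simps)
      qed
    qed
  qed
  show ?thesis using P1 P2 P3 by blast
qed

end
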